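(* Assume (K1). Let $\alpha,\beta\in\mathbb Z_+^d$ with $|\alpha|=|\beta|=3$. Then (i) $\int_{\mathbb R^d}K^{(\alpha)}(u)K^{(\beta)}(u)\,du=\int_{\mathbb R^d}[K^{(\rho_q)}(u)]^2du$ if $\alpha+\beta\in\{2\gamma:\gamma\in\Pi(\rho_q)\}$ for some $q\in\{1,2,3\}$ (with $q=3$ only if $d\ge3$), and $=0$ otherwise; (ii) $a_K\ge1$, and if $d\ge3$ then $b_K\le1$.
   Context: $d\ge2$. For a multi-index $\gamma=(\gamma_1,\dots,\gamma_d)\in\mathbb Z_+^d$, $|\gamma|=\sum\gamma_i$ and $K^{(\gamma)}=\partial^{|\gamma|}K/\partial x_1^{\gamma_1}\cdots\partial x_d^{\gamma_d}$. $\rho_1=(3,0,\dots,0)$, $\rho_2=(2,1,0,\dots,0)$, and for $d\ge3$ $\rho_3=(1,1,1,0,\dots,0)$; $\Pi(\rho_q)$ is the set of all vectors obtained by permuting the entries of $\rho_q$. $a_K=\int[K^{(\rho_1)}]^2/\int[K^{(\rho_2)}]^2$ and (for $d\ge3$) $b_K=\int[K^{(\rho_3)}]^2/\int[K^{(\rho_2)}]^2$. (K1): $K$ is a spherically symmetric probability density on $\mathbb R^d$ supported on the closed unit ball, with continuous partial derivatives up to order 4. *)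

theory Defs
  imports "HOL-Analysis.Analysis"
begin

text \<open>Points of R^d are vectors real^'n, with d = CARD('n). The index type carries a
linear order so that coordinates can be numbered 1..d (coordinate k is the k-th
smallest element of 'n, counting from 0 in Isabelle).\<close>

definition coord :: "nat \<Rightarrow> 'n::{finite,linorder}" where
  "coord k = sorted_list_of_set (UNIV :: 'n set) ! k"

definition partial :: "'n::finite \<Rightarrow> (real^'n \<Rightarrow> real) \<Rightarrow> real^'n \<Rightarrow> real" where
  "partial i f x = deriv (\<lambda>t. f (x + t *\<^sub>R axis i 1)) 0"

fun pdl :: "'n::finite list \<Rightarrow> (real^'n \<Rightarrow> real) \<Rightarrow> real^'n \<Rightarrow> real" where
  "pdl [] f = f"
| "pdl (i # is) f = partial i (pdl is f)"

definition cont_partials_upto :: "nat \<Rightarrow> (real^'n::finite \<Rightarrow> real) \<Rightarrow> bool" where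
  "cont_partials_upto m f \<longleftrightarrow>
     (\<forall>is. length is \<le> m \<longrightarrow> continuous_on UNIV (pdl is f)) \<and>
     (\<forall>is i x. length is < m \<longrightarrow>
        ((\<lambda>t. pdl is f (x + t *\<^sub>R axis i 1)) has_real_derivative pdl (i # is) f x) (at 0))"

definition mi_order :: "('n::finite \<Rightarrow> nat) \<Rightarrow> nat" where
  "mi_order \<gamma> = (\<Sum>i\<in>UNIV. \<gamma> i)"

definition mderiv :: "('n::finite \<Rightarrow> nat) \<Rightarrow> (real^'n \<Rightarrow> real) \<Rightarrow> real^'n \<Rightarrow> real" where
  "mderiv \<gamma> f = pdl (SOME is. \<forall>i. count_list is i = \<gamma> i) f"

definition rho :: "nat \<Rightarrow> 'n::{finite,linorder} \<Rightarrow> nat" where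
  "rho q = (if q = 1 then (\<lambda>j. if j = coord 0 then 3 else 0)
            else if q = 2 then (\<lambda>j. if j = coord 0 then 2 else if j = coord 1 then 1 else 0)
            else (\<lambda>j. if j = coord 0 \<or> j = coord 1 \<or> j = coord 2 then 1 else 0))"

definition Perms :: "('n::finite \<Rightarrow> nat) \<Rightarrow> ('n \<Rightarrow> nat) set" where
  "Perms \<gamma> = {\<gamma> \<circ> \<sigma> | \<sigma>. \<sigma> permutes (UNIV :: 'n set)}"

definition sq_int :: "('n::finite \<Rightarrow> nat) \<Rightarrow> (real^'n \<Rightarrow> real) \<Rightarrow> real" where
  "sq_int \<gamma> K = (LINT u|lborel. (mderiv \<gamma> K u)\<^sup>2)"

definition a_K :: "(real^'n::{finite,linorder} \<Rightarrow> real) \<Rightarrow> real" where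
  "a_K K = sq_int (rho 1) K / sq_int (rho 2) K"

definition b_K :: "(real^'n::{finite,linorder} \<Rightarrow> real) \<Rightarrow> real" where
  "b_K K = sq_int (rho 3) K / sq_int (rho 2) K"

definition K1 :: "(real^'n::finite \<Rightarrow> real) \<Rightarrow> bool" where
  "K1 K \<longleftrightarrow>
     (\<forall>x y. norm x = norm y \<longrightarrow> K x = K y) \<and>
     (\<forall>x. 0 \<le> K x) \<and> integrable lborel K \<and> (LINT u|lborel. K u) = 1 \<and>
     (\<forall>x. 1 < norm x \<longrightarrow> K x = 0) \<and>
     cont_partials_upto 4 K"

end

theory Submission
  imports Defs
begin


lemma line_deriv:
  fixes g :: "'a::real_normed_vector \<Rightarrow> real"
  assumes "\<And>x. ((\<lambda>t. g (x + t *\<^sub>R v)) has_real_derivative g' x) (at 0)"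
  shows "((\<lambda>t. g (y + t *\<^sub>R v)) has_real_derivative g' (y + s *\<^sub>R v)) (at s)"
proof -
  have "((\<lambda>t. g ((y + s *\<^sub>R v) + t *\<^sub>R v)) has_real_derivative g' (y + s *\<^sub>R v)) (at 0)"
    by (rule assms)
  then have "((\<lambda>t. g (y + (t + s) *\<^sub>R v)) has_real_derivative g' (y + s *\<^sub>R v)) (at 0)"
    by (simp add: algebra_simps scaleR_add_left)
  then show ?thesis using DERIV_shift[of "\<lambda>t. g (y + t *\<^sub>R v)" "g' (y + s *\<^sub>R v)" 0 s]
    by simp
qed

lemma mvt_line:
  fixes F :: "real \<Rightarrow> real"
  assumes "\<And>s. (F has_real_derivative F' s) (at s)" "h \<noteq> 0"
  shows "\<exists>z. \<bar>z\<bar> \<le> \<bar>h\<bar> \<and> F h - F 0 = h * F' z"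
proof (cases "h > 0")
  case True
  from MVT2[of 0 h F F'] True assms(1) obtain z where "0 < z" "z < h" "F h - F 0 = (h - 0) * F' z"
    by blast
  then show ?thesis by (intro exI[of _ z]) auto
next
  case False
  with assms have "h < 0" by auto
  from MVT2[of h 0 F F'] this assms(1) obtain z where "h < z" "z < 0" "F 0 - F h = (0 - h) * F' z"
    by blast
  then show ?thesis by (intro exI[of _ z]) (auto simp: algebra_simps)
qed

lemma mixed_mvt:
  fixes f :: "'a::real_normed_vector \<Rightarrow> real"
  assumes fu: "\<And>x. ((\<lambda>t. f (x + t *\<^sub>R u)) has_real_derivative fu x) (at 0)"
    and fuv: "\<And>x. ((\<lambda>t. fu (x + t *\<^sub>R v)) has_real_derivative fuv x) (at 0)"
    and h: "h \<noteq> 0"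
  shows "\<exists>s t. \<bar>s\<bar> \<le> \<bar>h\<bar> \<and> \<bar>t\<bar> \<le> \<bar>h\<bar> \<and>
     f (x + h *\<^sub>R u + h *\<^sub>R v) - f (x + h *\<^sub>R u) - f (x + h *\<^sub>R v) + f x
       = h * h * fuv (x + s *\<^sub>R u + t *\<^sub>R v)"
proof -
  define F where "F s = f (x + h *\<^sub>R v + s *\<^sub>R u) - f (x + s *\<^sub>R u)" for s
  have dF: "(F has_real_derivative (fu (x + h *\<^sub>R v + s *\<^sub>R u) - fu (x + s *\<^sub>R u))) (at s)" for s
    unfolding F_def by (intro derivative_intros line_deriv[of f u fu] fu)
  from mvt_line[OF dF h] obtain s where s: "\<bar>s\<bar> \<le> \<bar>h\<bar>"
    "F h - F 0 = h * (fu (x + h *\<^sub>R v + s *\<^sub>R u) - fu (x + s *\<^sub>R u))" by blast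
  define G where "G t = fu (x + s *\<^sub>R u + t *\<^sub>R v)" for t
  have dG: "(G has_real_derivative fuv (x + s *\<^sub>R u + t *\<^sub>R v)) (at t)" for t
    unfolding G_def by (rule line_deriv[of fu v fuv]) (rule fuv)
  from mvt_line[OF dG h] obtain t where t: "\<bar>t\<bar> \<le> \<bar>h\<bar>"
    "G h - G 0 = h * fuv (x + s *\<^sub>R u + t *\<^sub>R v)" by blast
  have "f (x + h *\<^sub>R u + h *\<^sub>R v) - f (x + h *\<^sub>R u) - f (x + h *\<^sub>R v) + f x = F h - F 0"
    by (simp add: F_def algebra_simps)
  also have "\<dots> = h * (G h - G 0)" using s(2) by (simp add: G_def algebra_simps)
  also have "\<dots> = h * h * fuv (x + s *\<^sub>R u + t *\<^sub>R v)" using t(2) by simp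
  finally show ?thesis using s(1) t(1) by blast
qed

lemma clairaut:
  fixes f :: "'a::real_normed_vector \<Rightarrow> real"
  assumes fu: "\<And>x. ((\<lambda>t. f (x + t *\<^sub>R u)) has_real_derivative fu x) (at 0)"
    and fuv: "\<And>x. ((\<lambda>t. fu (x + t *\<^sub>R v)) has_real_derivative fuv x) (at 0)"
    and fv: "\<And>x. ((\<lambda>t. f (x + t *\<^sub>R v)) has_real_derivative fv x) (at 0)"
    and fvu: "\<And>x. ((\<lambda>t. fv (x + t *\<^sub>R u)) has_real_derivative fvu x) (at 0)"
    and c1: "continuous_on UNIV fuv" and c2: "continuous_on UNIV fvu"
  shows "fuv x = fvu x"
proof -
  define h where "h n = 1 / real (Suc n)" for n
  have hnz: "h n \<noteq> 0" for n by (simp add: h_def)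
  have h0: "h \<longlonglongrightarrow> 0" unfolding h_def by (rule LIMSEQ_inverse_real_of_nat[simplified inverse_eq_divide])
  have "\<forall>n. \<exists>p q. norm (p - x) \<le> \<bar>h n\<bar> * (norm u + norm v) \<and> norm (q - x) \<le> \<bar>h n\<bar> * (norm u + norm v)
       \<and> fuv p = fvu q"
  proof
    fix n
    obtain s t where st: "\<bar>s\<bar> \<le> \<bar>h n\<bar>" "\<bar>t\<bar> \<le> \<bar>h n\<bar>"
      "f (x + h n *\<^sub>R u + h n *\<^sub>R v) - f (x + h n *\<^sub>R u) - f (x + h n *\<^sub>R v) + f x
       = h n * h n * fuv (x + s *\<^sub>R u + t *\<^sub>R v)"
      using mixed_mvt[OF fu fuv hnz] by blast
    obtain s' t' where st': "\<bar>s'\<bar> \<le> \<bar>h n\<bar>" "\<bar>t'\<bar> \<le> \<bar>h n\<bar>"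
      "f (x + h n *\<^sub>R v + h n *\<^sub>R u) - f (x + h n *\<^sub>R v) - f (x + h n *\<^sub>R u) + f x
       = h n * h n * fvu (x + s' *\<^sub>R v + t' *\<^sub>R u)"
      using mixed_mvt[OF fv fvu hnz] by blast
    have "h n * h n * fuv (x + s *\<^sub>R u + t *\<^sub>R v) = h n * h n * fvu (x + s' *\<^sub>R v + t' *\<^sub>R u)"
      using st(3) st'(3) by (simp add: algebra_simps)
    then have eq: "fuv (x + s *\<^sub>R u + t *\<^sub>R v) = fvu (x + s' *\<^sub>R v + t' *\<^sub>R u)"
      using hnz by simp
    have b1: "norm ((x + s *\<^sub>R u + t *\<^sub>R v) - x) \<le> \<bar>h n\<bar> * (norm u + norm v)"
    proof -
      have "norm ((x + s *\<^sub>R u + t *\<^sub>R v) - x) \<le> \<bar>s\<bar> * norm u + \<bar>t\<bar> * norm v"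
        using norm_triangle_ineq[of "s *\<^sub>R u" "t *\<^sub>R v"] by simp
      also have "\<dots> \<le> \<bar>h n\<bar> * norm u + \<bar>h n\<bar> * norm v"
        using st by (intro add_mono mult_right_mono) auto
      finally show ?thesis by (simp add: algebra_simps)
    qed
    have b2: "norm ((x + s' *\<^sub>R v + t' *\<^sub>R u) - x) \<le> \<bar>h n\<bar> * (norm u + norm v)"
    proof -
      have "norm ((x + s' *\<^sub>R v + t' *\<^sub>R u) - x) \<le> \<bar>s'\<bar> * norm v + \<bar>t'\<bar> * norm u"
        using norm_triangle_ineq[of "s' *\<^sub>R v" "t' *\<^sub>R u"] by simp
      also have "\<dots> \<le> \<bar>h n\<bar> * norm v + \<bar>h n\<bar> * norm u"
        using st' by (intro add_mono mult_right_mono) auto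
      finally show ?thesis by (simp add: algebra_simps)
    qed
    show "\<exists>p q. norm (p - x) \<le> \<bar>h n\<bar> * (norm u + norm v) \<and> norm (q - x) \<le> \<bar>h n\<bar> * (norm u + norm v)
       \<and> fuv p = fvu q" using eq b1 b2 by blast
  qed
  then obtain p q where pq: "\<And>n. norm (p n - x) \<le> \<bar>h n\<bar> * (norm u + norm v)"
    "\<And>n. norm (q n - x) \<le> \<bar>h n\<bar> * (norm u + norm v)" "\<And>n. fuv (p n) = fvu (q n)"
    by metis
  have hb: "(\<lambda>n. \<bar>h n\<bar> * (norm u + norm v)) \<longlonglongrightarrow> 0"
    using tendsto_mult[OF tendsto_rabs[OF h0] tendsto_const[of "norm u + norm v"]] by simp
  have pl: "p \<longlonglongrightarrow> x"
  proof -
    have "(\<lambda>n. p n - x) \<longlonglongrightarrow> 0"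
      by (rule Lim_null_comparison[OF _ hb]) (use pq(1) in auto)
    then show ?thesis by (simp add: LIM_zero_iff)
  qed
  have ql: "q \<longlonglongrightarrow> x"
  proof -
    have "(\<lambda>n. q n - x) \<longlonglongrightarrow> 0"
      by (rule Lim_null_comparison[OF _ hb]) (use pq(2) in auto)
    then show ?thesis by (simp add: LIM_zero_iff)
  qed
  have "(\<lambda>n. fuv (p n)) \<longlonglongrightarrow> fuv x"
    using c1 pl by (auto intro: continuous_on_tendsto_compose)
  moreover have "(\<lambda>n. fuv (p n)) \<longlonglongrightarrow> fvu x"
    unfolding pq(3) using c2 ql by (auto intro: continuous_on_tendsto_compose)
  ultimately show ?thesis by (rule LIMSEQ_unique)
qed



lemma pdl_append: "pdl (a @ b) f = pdl a (pdl b f)"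
  by (induction a) auto

lemma cpu_cont: "cont_partials_upto m K \<Longrightarrow> length is \<le> m \<Longrightarrow> continuous_on UNIV (pdl is K)"
  unfolding cont_partials_upto_def by blast

lemma cpu_deriv: "cont_partials_upto m K \<Longrightarrow> length is < m \<Longrightarrow>
   ((\<lambda>t. pdl is K (x + t *\<^sub>R axis i 1)) has_real_derivative pdl (i # is) K x) (at 0)"
  unfolding cont_partials_upto_def by blast

lemma swap2:
  assumes c: "cont_partials_upto 4 K" and l: "length b \<le> 2"
  shows "pdl (i # j # b) K = pdl (j # i # b) K"
proof
  fix x
  have d1: "\<And>x. ((\<lambda>t. pdl b K (x + t *\<^sub>R axis j 1)) has_real_derivative pdl (j # b) K x) (at 0)"
    by (rule cpu_deriv[OF c]) (use l in simp)
  have d2: "\<And>x. ((\<lambda>t. pdl (j # b) K (x + t *\<^sub>R axis i 1)) has_real_derivative pdl (i # j # b) K x) (at 0)"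
    by (rule cpu_deriv[OF c]) (use l in simp)
  have d3: "\<And>x. ((\<lambda>t. pdl b K (x + t *\<^sub>R axis i 1)) has_real_derivative pdl (i # b) K x) (at 0)"
    by (rule cpu_deriv[OF c]) (use l in simp)
  have d4: "\<And>x. ((\<lambda>t. pdl (i # b) K (x + t *\<^sub>R axis j 1)) has_real_derivative pdl (j # i # b) K x) (at 0)"
    by (rule cpu_deriv[OF c]) (use l in simp)
  have c5: "continuous_on UNIV (pdl (i # j # b) K)" by (rule cpu_cont[OF c]) (use l in simp)
  have c6: "continuous_on UNIV (pdl (j # i # b) K)" by (rule cpu_cont[OF c]) (use l in simp)
  show "pdl (i # j # b) K x = pdl (j # i # b) K x"
    using clairaut[OF d1 d2 d3 d4 c5 c6] .
qed

lemma move_front: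
  assumes c: "cont_partials_upto 4 K"
  shows "length (a @ i # b) \<le> 4 \<Longrightarrow> pdl (a @ i # b) K = pdl (i # a @ b) K"
proof (induction a)
  case Nil
  then show ?case by simp
next
  case (Cons x a)
  then have "pdl ((x # a) @ i # b) K = partial x (pdl (i # a @ b) K)" by simp
  also have "\<dots> = pdl (x # i # a @ b) K" by simp
  also have "\<dots> = pdl (i # x # a @ b) K"
    by (rule swap2[OF c]) (use Cons.prems in simp)
  finally show ?case by simp
qed

lemma pdl_perm:
  assumes c: "cont_partials_upto 4 K"
  shows "length xs \<le> 4 \<Longrightarrow> mset xs = mset js \<Longrightarrow> pdl xs K = pdl js K"
proof (induction xs arbitrary: js)
  case Nil
  then show ?case by simp
next
  case (Cons i xs)
  then have "i \<in> set js" by (metis list.set_intros(1) set_mset_mset)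
  then obtain a b where js: "js = a @ i # b" by (meson split_list)
  have l: "length (a @ i # b) \<le> 4" using Cons.prems js
    by (metis mset_eq_length)
  have "pdl js K = pdl (i # a @ b) K" unfolding js by (rule move_front[OF c l])
  moreover have "pdl xs K = pdl (a @ b) K"
    by (rule Cons.IH) (use Cons.prems js in auto)
  ultimately show ?case by simp
qed

lemma exists_list_counts:
  fixes \<alpha> :: "'n::finite \<Rightarrow> nat"
  shows "\<exists>xs. \<forall>i. count_list xs i = \<alpha> i"
proof -
  have "finite {x. 0 < \<alpha> x}" by simp
  then have cnt: "count (Abs_multiset \<alpha>) = \<alpha>"
    by (simp add: count_Abs_multiset)
  obtain xs where "mset xs = Abs_multiset \<alpha>" using ex_mset by blast
  then show ?thesis by (metis cnt count_mset)
qed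

lemma length_counts:
  fixes xs :: "'n::finite list"
  shows "length xs = (\<Sum>i\<in>UNIV. count_list xs i)"
proof (induction xs)
  case (Cons a xs)
  have "(\<Sum>i\<in>UNIV. count_list (a # xs) i) = (\<Sum>i\<in>UNIV. count_list xs i + (if a = i then 1 else 0))"
    by (intro sum.cong) auto
  also have "\<dots> = (\<Sum>i\<in>UNIV. count_list xs i) + 1" by (simp add: sum.distrib)
  finally show ?case using Cons by simp
qed simp

lemma mderiv_eq:
  assumes c: "cont_partials_upto 4 K" and o: "mi_order \<alpha> \<le> 4"
    and cl: "\<And>i. count_list xs i = \<alpha> i"
  shows "mderiv \<alpha> K = pdl xs K"
proof -
  let ?js = "SOME is. \<forall>i. count_list is i = \<alpha> i"
  have js: "\<forall>i. count_list ?js i = \<alpha> i"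
    using someI_ex[OF exists_list_counts[of \<alpha>]] .
  have "mset ?js = mset xs"
    by (rule multiset_eqI) (simp add: count_mset js cl)
  moreover have "length ?js \<le> 4"
    using o js by (simp add: length_counts mi_order_def)
  ultimately show ?thesis unfolding mderiv_def by (metis c pdl_perm)
qed



definition nice :: "('a::euclidean_space \<Rightarrow> real) \<Rightarrow> bool" where
  "nice f \<longleftrightarrow> continuous_on UNIV f \<and> (\<forall>x. 1 < norm x \<longrightarrow> f x = 0)"

lemma nice_integrable: "nice f \<Longrightarrow> integrable lborel f"
proof -
  assume n: "nice f"
  have "integrable lborel (\<lambda>x. indicator (cball 0 1) x *\<^sub>R f x)"
    by (rule borel_integrable_compact) (use n in \<open>auto simp: nice_def intro: continuous_on_subset\<close>)
  moreover have "(\<lambda>x. indicator (cball 0 1) x *\<^sub>R f x) = f"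
    using n by (auto simp: nice_def indicator_def fun_eq_iff)
  ultimately show ?thesis by simp
qed

lemma nice_bounded: "nice f \<Longrightarrow> \<exists>B. \<forall>x. \<bar>f x\<bar> \<le> B"
proof -
  assume n: "nice f"
  have "compact (cball (0::'a) 1)" by simp
  moreover have "continuous_on (cball 0 1) f" using n by (auto simp: nice_def intro: continuous_on_subset)
  ultimately have "bounded (f ` cball 0 1)" by (simp add: compact_continuous_image compact_imp_bounded)
  then obtain B where B: "\<And>y. y \<in> f ` cball 0 1 \<Longrightarrow> norm y \<le> B" by (meson bounded_iff)
  have "\<bar>f x\<bar> \<le> max B 0" for x
  proof (cases "norm x \<le> 1")
    case True then show ?thesis using B[of "f x"] by auto
  next
    case False then show ?thesis using n by (auto simp: nice_def)
  qed
  then show ?thesis by blast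
qed

lemma nice_measurable: "nice f \<Longrightarrow> f \<in> borel_measurable lborel"
  unfolding nice_def using borel_measurable_continuous_onI by auto

lemma nice_mult: "nice f \<Longrightarrow> continuous_on UNIV g \<Longrightarrow> nice (\<lambda>x. f x * g x)"
  unfolding nice_def by (auto intro: continuous_intros)

lemma nice_mult2: "continuous_on UNIV f \<Longrightarrow> nice g \<Longrightarrow> nice (\<lambda>x. f x * g x)"
  unfolding nice_def by (auto intro: continuous_intros)

lemma cont_shift: fixes f :: "'a::real_normed_vector \<Rightarrow> 'b::topological_space" shows "continuous_on UNIV f \<Longrightarrow> continuous_on UNIV (\<lambda>x. f (x + c))"
proof -
  assume c: "continuous_on UNIV f"
  have "continuous_on UNIV (f \<circ> (\<lambda>x. x + c))"
    by (rule continuous_on_compose) (auto intro!: continuous_on_add continuous_on_id continuous_on_const intro: continuous_on_subset[OF c])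
  then show ?thesis by (simp add: o_def)
qed

lemma dq_limit:
  fixes f g f' :: "'a::euclidean_space \<Rightarrow> real"
  assumes nf: "nice f" and ng: "nice g" and cf': "continuous_on UNIV f'" and B: "\<And>x. \<bar>f' x\<bar> \<le> B"
    and df: "\<And>x. ((\<lambda>t. f (x + t *\<^sub>R v)) has_real_derivative f' x) (at 0)"
    and t0: "t \<longlonglongrightarrow> 0" and tnz: "\<And>n. t n \<noteq> 0"
  shows "(\<lambda>n. LINT x|lborel. (f (x + t n *\<^sub>R v) - f x) / t n * g x) \<longlonglongrightarrow> (LINT x|lborel. f' x * g x)"
proof (rule integral_dominated_convergence[where w="\<lambda>x. B * \<bar>g x\<bar>"])
  have cf: "continuous_on UNIV f" and cg: "continuous_on UNIV g" using nf ng by (auto simp: nice_def)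
  show "(\<lambda>x. f' x * g x) \<in> borel_measurable lborel"
    using cf' cg by (auto intro!: borel_measurable_continuous_onI continuous_intros)
  show "(\<lambda>x. (f (x + t n *\<^sub>R v) - f x) / t n * g x) \<in> borel_measurable lborel" for n
    using cont_shift[OF cf, of "t n *\<^sub>R v"] cf cg tnz[of n]
    by (auto intro!: borel_measurable_continuous_onI continuous_intros)
  show "integrable lborel (\<lambda>x. B * \<bar>g x\<bar>)"
    using nice_integrable[OF ng] by auto
  show "AE x in lborel. (\<lambda>n. (f (x + t n *\<^sub>R v) - f x) / t n * g x) \<longlonglongrightarrow> f' x * g x"
  proof (rule AE_I2)
    fix x
    have "((\<lambda>h. (f (x + (0 + h) *\<^sub>R v) - f (x + 0 *\<^sub>R v)) / h) \<longlongrightarrow> f' x) (at 0)"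
      using df[of x] unfolding DERIV_def .
    then have l: "((\<lambda>h. (f (x + h *\<^sub>R v) - f x) / h) \<longlongrightarrow> f' x) (at 0)" by simp
    have "filterlim t (at 0) sequentially"
      using t0 tnz by (auto simp: filterlim_at)
    from filterlim_compose[OF l this]
    have "(\<lambda>n. (f (x + t n *\<^sub>R v) - f x) / t n) \<longlonglongrightarrow> f' x" .
    then show "(\<lambda>n. (f (x + t n *\<^sub>R v) - f x) / t n * g x) \<longlonglongrightarrow> f' x * g x"
      by (intro tendsto_intros)
  qed
  show "AE x in lborel. norm ((f (x + t n *\<^sub>R v) - f x) / t n * g x) \<le> B * \<bar>g x\<bar>" for n
  proof (rule AE_I2)
    fix x
    have d: "((\<lambda>s. f (x + s *\<^sub>R v)) has_real_derivative f' (x + s *\<^sub>R v)) (at s)" for s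
      by (rule line_deriv) (rule df)
    obtain z where z: "f (x + t n *\<^sub>R v) - f (x + 0 *\<^sub>R v) = t n * f' (x + z *\<^sub>R v)"
      using mvt_line[OF d tnz[of n]] by blast
    then have "(f (x + t n *\<^sub>R v) - f x) / t n = f' (x + z *\<^sub>R v)"
      using tnz[of n] by simp
    then show "norm ((f (x + t n *\<^sub>R v) - f x) / t n * g x) \<le> B * \<bar>g x\<bar>"
      using B[of "x + z *\<^sub>R v"] by (simp add: abs_mult mult_right_mono)
  qed
qed

lemma integral_translate:
  fixes F :: "'a::euclidean_space \<Rightarrow> real"
  assumes "F \<in> borel_measurable borel"
  shows "(LINT x|lborel. F x) = (LINT x|lborel. F (c + x))"
proof -
  have "(LINT x|lborel. F x) = (LINT x|distr lborel borel ((+) c). F x)"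
    by (simp add: lborel_distr_plus)
  also have "\<dots> = (LINT x|lborel. F (c + x))"
    by (rule integral_distr) (use assms in auto)
  finally show ?thesis .
qed

lemma ibp:
  fixes f g f' g' :: "'a::euclidean_space \<Rightarrow> real"
  assumes nf: "nice f" and ng: "nice g" and nf': "nice f'" and ng': "nice g'"
    and df: "\<And>x. ((\<lambda>t. f (x + t *\<^sub>R v)) has_real_derivative f' x) (at 0)"
    and dg: "\<And>x. ((\<lambda>t. g (x + t *\<^sub>R v)) has_real_derivative g' x) (at 0)"
  shows "(LINT x|lborel. f' x * g x) = - (LINT x|lborel. f x * g' x)"
proof -
  have cf: "continuous_on UNIV f" and cg: "continuous_on UNIV g" using nf ng by (auto simp: nice_def)
  obtain Bf where Bf: "\<And>x. \<bar>f' x\<bar> \<le> Bf" using nice_bounded[OF nf'] by blast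
  obtain Bg where Bg: "\<And>x. \<bar>g' x\<bar> \<le> Bg" using nice_bounded[OF ng'] by blast
  define h where "h n = 1 / real (Suc n)" for n
  have hnz: "h n \<noteq> 0" for n by (simp add: h_def)
  have h0: "h \<longlonglongrightarrow> 0" unfolding h_def by (rule LIMSEQ_inverse_real_of_nat[simplified inverse_eq_divide])
  have mh0: "(\<lambda>n. - h n) \<longlonglongrightarrow> 0" using tendsto_minus[OF h0] by simp
  have Q: "(\<lambda>n. LINT x|lborel. (f (x + h n *\<^sub>R v) - f x) / h n * g x) \<longlonglongrightarrow> (LINT x|lborel. f' x * g x)"
    by (rule dq_limit[OF nf ng _ Bf df h0 hnz]) (use nf' in \<open>simp add: nice_def\<close>)
  have R: "(\<lambda>n. LINT x|lborel. (g (x + (- h n) *\<^sub>R v) - g x) / (- h n) * f x) \<longlonglongrightarrow> (LINT x|lborel. g' x * f x)"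
    by (rule dq_limit[OF ng nf _ Bg dg mh0]) (use ng' hnz in \<open>simp_all add: nice_def\<close>)
  have eq: "(LINT x|lborel. (f (x + h n *\<^sub>R v) - f x) / h n * g x)
      = - (LINT x|lborel. (g (x + (- h n) *\<^sub>R v) - g x) / (- h n) * f x)" for n
  proof -
    let ?c = "h n *\<^sub>R v"
    have n1: "nice (\<lambda>x. f (x + ?c) * g x)" by (rule nice_mult2[OF cont_shift[OF cf] ng])
    have n2: "nice (\<lambda>x. f x * g (x - ?c))"
      using nice_mult[OF nf cont_shift[OF cg, of "- ?c"]] by simp
    have n3: "nice (\<lambda>x. f x * g x)" by (rule nice_mult[OF nf cg])
    have tr: "(LINT x|lborel. f x * g (x - ?c)) = (LINT x|lborel. f (x + ?c) * g x)"
      using integral_translate[of "\<lambda>x. f x * g (x - ?c)" ?c] n2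
      by (simp add: nice_def borel_measurable_continuous_onI add.commute)
    have "(LINT x|lborel. (f (x + ?c) - f x) / h n * g x)
        = (LINT x|lborel. (f (x + ?c) * g x - f x * g x) / h n)"
      by (intro Bochner_Integration.integral_cong) (auto simp: algebra_simps)
    also have "\<dots> = ((LINT x|lborel. f (x + ?c) * g x) - (LINT x|lborel. f x * g x)) / h n"
      using nice_integrable[OF n1] nice_integrable[OF n3] by simp
    also have "\<dots> = ((LINT x|lborel. f x * g (x - ?c)) - (LINT x|lborel. f x * g x)) / h n"
      using tr by simp
    also have "\<dots> = (LINT x|lborel. (f x * g (x - ?c) - f x * g x) / h n)"
      using nice_integrable[OF n2] nice_integrable[OF n3] by simp
    also have "\<dots> = - (LINT x|lborel. (g (x + (- h n) *\<^sub>R v) - g x) / (- h n) * f x)"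
      by (subst integral_minus[symmetric], intro Bochner_Integration.integral_cong)
         (auto simp: algebra_simps divide_simps hnz)
    finally show ?thesis .
  qed
  have "(\<lambda>n. LINT x|lborel. (f (x + h n *\<^sub>R v) - f x) / h n * g x) \<longlonglongrightarrow> - (LINT x|lborel. g' x * f x)"
    unfolding eq by (rule tendsto_minus[OF R])
  with Q have "(LINT x|lborel. f' x * g x) = - (LINT x|lborel. g' x * f x)"
    using LIMSEQ_unique by blast
  then show ?thesis by (simp add: mult.commute)
qed



lemma K1_cpu: "K1 K \<Longrightarrow> cont_partials_upto 4 K" by (simp add: K1_def)

lemma pdl_supp:
  assumes c: "cont_partials_upto 4 K" and s: "\<And>x. 1 < norm x \<Longrightarrow> K x = 0"
  shows "length xs \<le> 4 \<Longrightarrow> 1 < norm x \<Longrightarrow> pdl xs K x = 0"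
proof (induction xs arbitrary: x)
  case Nil
  then show ?case using s by simp
next
  case (Cons i xs)
  have d: "((\<lambda>t. pdl xs K (x + t *\<^sub>R axis i (1::real))) has_real_derivative pdl (i # xs) K x) (at 0)"
    by (rule cpu_deriv[OF c]) (use Cons.prems in simp)
  have ev: "eventually (\<lambda>t. pdl xs K (x + t *\<^sub>R axis i (1::real)) = 0) (nhds 0)"
  proof -
    have "0 < norm x - 1" using Cons.prems by simp
    moreover have "pdl xs K (x + t *\<^sub>R axis i (1::real)) = 0" if "dist t 0 < norm x - 1" for t
    proof (rule Cons.IH)
      show "length xs \<le> 4" using Cons.prems by simp
      have "norm x = norm ((x + t *\<^sub>R axis i (1::real)) - t *\<^sub>R axis i (1::real))" by simp
      also have "\<dots> \<le> norm (x + t *\<^sub>R axis i (1::real)) + norm (t *\<^sub>R axis i (1::real))"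
        by (rule norm_triangle_ineq4)
      finally have "norm x \<le> norm (x + t *\<^sub>R axis i (1::real)) + norm (t *\<^sub>R axis i (1::real))" .
      moreover have "norm (t *\<^sub>R axis i (1::real)) = \<bar>t\<bar>" by simp
      moreover have "\<bar>t\<bar> < norm x - 1" using that by (simp add: dist_real_def)
      ultimately show "1 < norm (x + t *\<^sub>R axis i (1::real))" by linarith
    qed
    ultimately show ?thesis unfolding eventually_nhds_metric by blast
  qed
  have "((\<lambda>t. pdl xs K (x + t *\<^sub>R axis i (1::real))) has_real_derivative 0) (at 0)"
    by (subst DERIV_cong_ev[OF refl ev refl]) (rule DERIV_const)
  then show ?case using d DERIV_unique by blast
qed

lemma pdl_nice:
  assumes k: "K1 K" and l: "length xs \<le> 4"
  shows "nice (pdl xs K)"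
proof -
  have s: "\<And>x. 1 < norm x \<Longrightarrow> K x = 0" using k unfolding K1_def by blast
  show ?thesis unfolding nice_def
    using cpu_cont[OF K1_cpu[OF k] l] pdl_supp[OF K1_cpu[OF k] s l] by blast
qed

lemma mi_order_upd: "mi_order (\<alpha>(i := \<alpha> i + 1)) = mi_order \<alpha> + 1"
proof -
  have "mi_order (\<alpha>(i := \<alpha> i + 1)) = (\<Sum>k\<in>UNIV. \<alpha> k + (if k = i then 1 else 0))"
    unfolding mi_order_def by (intro sum.cong) auto
  also have "\<dots> = mi_order \<alpha> + 1" by (simp add: sum.distrib mi_order_def)
  finally show ?thesis .
qed

lemma mi_order_upd_Suc: "mi_order (\<alpha>(i := Suc (\<alpha> i))) = Suc (mi_order \<alpha>)"
  using mi_order_upd[of \<alpha> i] by simp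

lemma count_list_Cons_upd: "count_list (i # xs) = (count_list xs)(i := count_list xs i + 1)"
  by (auto simp: fun_eq_iff)

lemma mderiv_list:
  assumes k: "K1 K" and o: "mi_order \<alpha> \<le> 4"
  obtains xs where "\<And>i. count_list xs i = \<alpha> i" "mderiv \<alpha> K = pdl xs K" "length xs = mi_order \<alpha>"
proof -
  obtain xs where x: "\<forall>i. count_list xs i = \<alpha> i" using exists_list_counts by blast
  show ?thesis
    by (rule that[of xs]) (use x mderiv_eq[OF K1_cpu[OF k] o, of xs] in \<open>auto simp: length_counts mi_order_def\<close>)
qed

lemma mderiv_nice:
  assumes k: "K1 K" and o: "mi_order \<alpha> \<le> 4"
  shows "nice (mderiv \<alpha> K)"
proof -
  obtain xs where "mderiv \<alpha> K = pdl xs K" "length xs = mi_order \<alpha>" using mderiv_list[OF k o] by metis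
  then show ?thesis using pdl_nice[OF k, of xs] o by simp
qed

lemma mderiv_step:
  assumes k: "K1 K" and o: "mi_order \<alpha> \<le> 3"
  shows "((\<lambda>t. mderiv \<alpha> K (x + t *\<^sub>R axis i 1)) has_real_derivative mderiv (\<alpha>(i := \<alpha> i + 1)) K x) (at 0)"
proof -
  obtain xs where x: "\<And>i. count_list xs i = \<alpha> i" "mderiv \<alpha> K = pdl xs K" "length xs = mi_order \<alpha>"
  proof -
    have o4: "mi_order \<alpha> \<le> 4" using o by simp
    show ?thesis using mderiv_list[OF k o4] that by blast
  qed
  have "mderiv (\<alpha>(i := \<alpha> i + 1)) K = pdl (i # xs) K"
    by (rule mderiv_eq[OF K1_cpu[OF k]]) (use o x in \<open>auto simp: mi_order_upd mi_order_upd_Suc\<close>)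
  moreover have "((\<lambda>t. pdl xs K (x + t *\<^sub>R axis i 1)) has_real_derivative pdl (i # xs) K x) (at 0)"
    by (rule cpu_deriv[OF K1_cpu[OF k]]) (use o x in simp)
  ultimately show ?thesis using x by simp
qed

lemma ibp_counts:
  assumes k: "K1 K" and oa: "mi_order \<alpha> \<le> 3" and ob: "mi_order \<beta> \<le> 3"
  shows "(LINT x|lborel. mderiv (\<alpha>(i := \<alpha> i + 1)) K x * mderiv \<beta> K x)
       = - (LINT x|lborel. mderiv \<alpha> K x * mderiv (\<beta>(i := \<beta> i + 1)) K x)"
  by (rule ibp[OF mderiv_nice[OF k] mderiv_nice[OF k] mderiv_nice[OF k] mderiv_nice[OF k]
        mderiv_step[OF k oa] mderiv_step[OF k ob]])
     (use oa ob in \<open>auto simp: mi_order_upd mi_order_upd_Suc\<close>)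



definition symT :: "('n::finite \<Rightarrow> real) \<Rightarrow> ('n \<Rightarrow> 'n) \<Rightarrow> real^'n \<Rightarrow> real^'n" where
  "symT s p x = (\<chi> j. s j * x $ p j)"

lemma symT_norm:
  assumes p: "p permutes UNIV" and s: "\<And>j. \<bar>s j\<bar> = 1"
  shows "norm (symT s p x) = norm x"
proof -
  have "(\<Sum>j\<in>UNIV. (s j * x $ p j)\<^sup>2) = (\<Sum>j\<in>UNIV. (x $ p j)\<^sup>2)"
  proof (intro sum.cong refl)
    fix j
    have "(s j)\<^sup>2 = 1" using s[of j] by (metis abs_power2 one_power2 power2_abs)
    then show "(s j * x $ p j)\<^sup>2 = (x $ p j)\<^sup>2" by (simp add: power_mult_distrib)
  qed
  also have "\<dots> = (\<Sum>j\<in>UNIV. (x $ j)\<^sup>2)"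
    using sum.reindex_bij_betw[OF permutes_imp_bij[OF p], of "\<lambda>j. (x $ j)\<^sup>2"] by simp
  finally show ?thesis unfolding norm_vec_def L2_set_def symT_def by simp
qed

lemma symT_add:
  assumes p: "p permutes UNIV"
  shows "symT s p (x + t *\<^sub>R axis j (1::real)) = symT s p x + (s (inv p j) * t) *\<^sub>R axis (inv p j) 1"
proof -
  have pj: "p m = j \<longleftrightarrow> m = inv p j" for m
    using p by (metis permutes_inverses(1) permutes_inverses(2))
  show ?thesis unfolding symT_def
    by (rule vec_eq_iff[THEN iffD2]) (auto simp: axis_def pj algebra_simps)
qed

lemma pdl_symT:
  assumes k: "K1 K" and p: "p permutes UNIV" and s: "\<And>j. \<bar>s j\<bar> = 1"
  shows "length xs \<le> 4 \<Longrightarrow>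
    pdl xs K x = prod_list (map (\<lambda>j. s (inv p j)) xs) * pdl (map (inv p) xs) K (symT s p x)"
proof (induction xs arbitrary: x)
  case Nil
  have rad: "\<And>x y. norm x = norm y \<Longrightarrow> K x = K y" using k unfolding K1_def by blast
  have "K (symT s p x) = K x" by (rule rad) (rule symT_norm[OF p s])
  then show ?case by simp
next
  case (Cons j xs)
  define k where "k = inv p j"
  define c where "c = prod_list (map (\<lambda>j. s (inv p j)) xs)"
  define xs' where "xs' = map (inv p) xs"
  have IH: "pdl xs K y = c * pdl xs' K (symT s p y)" for y
    using Cons unfolding c_def xs'_def by simp
  have dG: "((\<lambda>u. pdl xs' K (symT s p x + u *\<^sub>R axis k 1)) has_real_derivative pdl (k # xs') K (symT s p x)) (at (s k * 0))"
    using cpu_deriv[OF K1_cpu[OF k], of xs' "symT s p x" k] Cons.prems by (simp add: xs'_def)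
  have dl: "((\<lambda>t. s k * t) has_real_derivative s k) (at 0)"
    using DERIV_cmult[OF DERIV_ident, of "s k" 0] by simp
  have d: "((\<lambda>t. c * pdl xs' K (symT s p x + (s k * t) *\<^sub>R axis k 1)) has_real_derivative
      c * (pdl (k # xs') K (symT s p x) * s k)) (at 0)"
    by (rule DERIV_cmult) (rule DERIV_chain2[OF dG dl])
  have "pdl (j # xs) K x = deriv (\<lambda>t. pdl xs K (x + t *\<^sub>R axis j 1)) 0"
    by (simp add: partial_def)
  also have "(\<lambda>t. pdl xs K (x + t *\<^sub>R axis j 1)) = (\<lambda>t. c * pdl xs' K (symT s p x + (s k * t) *\<^sub>R axis k 1))"
    by (simp add: IH symT_add[OF p] k_def)
  also have "deriv \<dots> 0 = c * (pdl (k # xs') K (symT s p x) * s k)"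
    by (rule DERIV_imp_deriv[OF d])
  finally show ?case by (simp add: c_def xs'_def k_def)
qed

lemma count_list_map_inj: "inj f \<Longrightarrow> count_list (map f xs) (f y) = count_list xs y"
  by (induction xs) (auto dest: injD)

lemma prod_list_refl: "prod_list (map (\<lambda>j. if j = i then -1 else (1::real)) xs) = (-1) ^ count_list xs i"
  by (induction xs) auto

lemma prod_Basis_vec: "(\<Prod>b\<in>(Basis :: (real^'n) set). f b) = (\<Prod>i\<in>UNIV. f (axis i 1))"
proof -
  have B: "(Basis :: (real^'n) set) = (\<lambda>i. axis i 1) ` UNIV" unfolding Basis_vec_def by auto
  have "inj (\<lambda>i::'n. axis i (1::real))" by (auto intro!: injI simp: axis_eq_axis)
  then show ?thesis unfolding B by (simp add: prod.reindex)
qed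

lemma lborel_symT:
  fixes s :: "'n::finite \<Rightarrow> real" and p :: "'n \<Rightarrow> 'n"
  assumes p: "p permutes UNIV" and s: "\<And>j. s j = 1 \<or> s j = -1"
  shows "distr lborel borel (symT s p) = lborel"
proof (rule lborel_eqI[symmetric])
  have meas: "symT s p \<in> borel_measurable borel"
    unfolding symT_def by (intro borel_measurable_continuous_onI) (auto intro!: continuous_intros)
  show "sets (distr lborel borel (symT s p)) = sets borel" by simp
  fix l u :: "real^'n"
  assume lu: "\<And>b. b \<in> Basis \<Longrightarrow> l \<bullet> b \<le> u \<bullet> b"
  have lu': "l $ i \<le> u $ i" for i using lu[of "axis i 1"] by (auto simp: Basis_vec_def inner_axis)
  define l' :: "real^'n" where "l' = (\<chi> j. if s (inv p j) = 1 then l $ inv p j else - u $ inv p j)"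
  define u' :: "real^'n" where "u' = (\<chi> j. if s (inv p j) = 1 then u $ inv p j else - l $ inv p j)"
  have pinv: "p (inv p j) = j" for j using p by (meson permutes_inverses(1))
  have pinv2: "inv p (p m) = m" for m using p by (meson permutes_inverses(2))
  have pre: "symT s p -` box l u = box l' u'"
  proof (intro set_eqI iffI)
    fix x assume "x \<in> symT s p -` box l u"
    then have A: "\<And>m. l $ m < s m * x $ p m \<and> s m * x $ p m < u $ m"
      by (simp add: mem_box_cart symT_def)
    show "x \<in> box l' u'" unfolding mem_box_cart
    proof
      fix j
      have "l $ inv p j < s (inv p j) * x $ j \<and> s (inv p j) * x $ j < u $ inv p j"
        using A[of "inv p j"] by (simp add: pinv)
      then show "l' $ j < x $ j \<and> x $ j < u' $ j"
        using s[of "inv p j"] unfolding l'_def u'_def by (cases "s (inv p j) = 1") auto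
    qed
  next
    fix x assume "x \<in> box l' u'"
    then have A: "\<And>j. l' $ j < x $ j \<and> x $ j < u' $ j" by (simp add: mem_box_cart)
    have "l $ m < s m * x $ p m \<and> s m * x $ p m < u $ m" for m
      using A[of "p m"] s[of m] unfolding l'_def u'_def by (cases "s m = 1") (auto simp: pinv2)
    then show "x \<in> symT s p -` box l u" by (simp add: mem_box_cart symT_def)
  qed
  have le': "l' \<bullet> b \<le> u' \<bullet> b" if "b \<in> Basis" for b
    using that lu' unfolding l'_def u'_def by (auto simp: Basis_vec_def inner_axis)
  have r1: "(\<Prod>b\<in>Basis. (u' - l') \<bullet> b) = (\<Prod>j\<in>UNIV. (u - l) $ inv p j)"
    unfolding prod_Basis_vec by (intro prod.cong refl) (auto simp: inner_axis u'_def l'_def)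
  have r2: "(\<Prod>j\<in>UNIV. (u - l) $ inv p j) = (\<Prod>j\<in>UNIV. (u - l) $ j)"
    using prod.reindex_bij_betw[OF permutes_imp_bij[OF permutes_inv[OF p]], of "\<lambda>j. (u - l) $ j"] by simp
  have r3: "(\<Prod>j\<in>UNIV. (u - l) $ j) = (\<Prod>b\<in>Basis. (u - l) \<bullet> b)"
    unfolding prod_Basis_vec by (simp add: inner_axis)
  have "emeasure (distr lborel borel (symT s p)) (box l u) = emeasure lborel (box l' u')"
    using meas by (simp add: emeasure_distr pre)
  also have "\<dots> = (\<Prod>b\<in>Basis. (u' - l') \<bullet> b)" using le' by (rule emeasure_lborel_box)
  also have "\<dots> = (\<Prod>b\<in>Basis. (u - l) \<bullet> b)" using r1 r2 r3 by simp
  finally show "emeasure (distr lborel borel (symT s p)) (box l u) = (\<Prod>b\<in>Basis. (u - l) \<bullet> b)" .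
qed

lemma integral_symT:
  fixes F :: "real^'n::finite \<Rightarrow> real"
  assumes p: "p permutes UNIV" and s: "\<And>j. s j = 1 \<or> s j = -1" and F: "F \<in> borel_measurable borel"
  shows "(LINT x|lborel. F (symT s p x)) = (LINT x|lborel. F x)"
proof -
  have meas: "symT s p \<in> borel_measurable borel"
    unfolding symT_def by (intro borel_measurable_continuous_onI) (auto intro!: continuous_intros)
  have "(LINT x|lborel. F x) = (LINT x|distr lborel borel (symT s p). F x)"
    by (simp add: lborel_symT[OF p s])
  also have "\<dots> = (LINT x|lborel. F (symT s p x))"
    by (rule integral_distr) (use meas F in auto)
  finally show ?thesis by simp
qed



lemma mi_order_3: "mi_order \<alpha> = 3 \<Longrightarrow> mi_order \<alpha> \<le> (4::nat)" by simp

lemma mderiv_perm: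
  assumes k: "K1 K" and o: "mi_order \<alpha> \<le> 4" and p: "p permutes UNIV"
  shows "mderiv \<alpha> K x = mderiv (\<alpha> \<circ> p) K (symT (\<lambda>_. 1) p x)"
proof -
  obtain xs where xs: "\<And>i. count_list xs i = \<alpha> i" "mderiv \<alpha> K = pdl xs K" "length xs = mi_order \<alpha>"
    using mderiv_list[OF k o] by metis
  have injp: "inj (inv p)" using p permutes_inv permutes_inj by blast
  have cnt: "count_list (map (inv p) xs) k = (\<alpha> \<circ> p) k" for k
  proof -
    have "count_list (map (inv p) xs) k = count_list (map (inv p) xs) (inv p (p k))"
      using p by (simp add: permutes_inverses(2))
    also have "\<dots> = count_list xs (p k)" by (rule count_list_map_inj[OF injp])
    finally show ?thesis using xs(1) by simp
  qed
  have o2: "mi_order (\<alpha> \<circ> p) \<le> 4"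
  proof -
    have "mi_order (\<alpha> \<circ> p) = mi_order \<alpha>"
      unfolding mi_order_def using sum.reindex_bij_betw[OF permutes_imp_bij[OF p], of \<alpha>] by simp
    then show ?thesis using o by simp
  qed
  have "mderiv (\<alpha> \<circ> p) K = pdl (map (inv p) xs) K"
    by (rule mderiv_eq[OF K1_cpu[OF k] o2]) (rule cnt)
  moreover have "pdl xs K x = prod_list (map (\<lambda>j. 1) xs) * pdl (map (inv p) xs) K (symT (\<lambda>_. 1) p x)"
    by (rule pdl_symT[OF k p]) (use xs o in auto)
  moreover have "prod_list (map (\<lambda>j. 1::real) xs) = 1" by (induction xs) auto
  ultimately show ?thesis using xs by simp
qed

lemma sq_int_perm:
  assumes k: "K1 K" and o: "mi_order \<alpha> \<le> 4" and p: "p permutes UNIV"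
  shows "sq_int \<alpha> K = sq_int (\<alpha> \<circ> p) K"
proof -
  have o2: "mi_order (\<alpha> \<circ> p) \<le> 4"
  proof -
    have "mi_order (\<alpha> \<circ> p) = mi_order \<alpha>"
      unfolding mi_order_def using sum.reindex_bij_betw[OF permutes_imp_bij[OF p], of \<alpha>] by simp
    then show ?thesis using o by simp
  qed
  have meas: "(\<lambda>x. (mderiv (\<alpha> \<circ> p) K x)\<^sup>2) \<in> borel_measurable borel"
    using mderiv_nice[OF k o2] unfolding nice_def
    by (intro borel_measurable_continuous_onI) (auto intro!: continuous_intros)
  have "sq_int \<alpha> K = (LINT x|lborel. (mderiv (\<alpha> \<circ> p) K (symT (\<lambda>_. 1) p x))\<^sup>2)"
    unfolding sq_int_def using mderiv_perm[OF k o p] by simp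
  also have "\<dots> = sq_int (\<alpha> \<circ> p) K"
    unfolding sq_int_def by (rule integral_symT[OF p _ meas]) simp
  finally show ?thesis .
qed

lemma odd_case:
  assumes k: "K1 K" and oa: "mi_order \<alpha> \<le> 4" and ob: "mi_order \<beta> \<le> 4" and odd: "odd (\<alpha> i + \<beta> i)"
  shows "(LINT x|lborel. mderiv \<alpha> K x * mderiv \<beta> K x) = 0"
proof -
  define s :: "'a \<Rightarrow> real" where "s = (\<lambda>j. if j = i then -1 else 1)"
  have sabs: "\<And>j. \<bar>s j\<bar> = 1" by (simp add: s_def)
  have s1: "\<And>j. s j = 1 \<or> s j = -1" by (simp add: s_def)
  have pid: "id permutes UNIV" by (rule permutes_id)
  have rflx: "mderiv \<gamma> K x = (-1) ^ \<gamma> i * mderiv \<gamma> K (symT s id x)" if o: "mi_order \<gamma> \<le> 4" for \<gamma> x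
  proof -
    obtain xs where xs: "\<And>i. count_list xs i = \<gamma> i" "mderiv \<gamma> K = pdl xs K" "length xs = mi_order \<gamma>"
      using mderiv_list[OF k o] by metis
    have "pdl xs K x = prod_list (map (\<lambda>j. s (inv id j)) xs) * pdl (map (inv id) xs) K (symT s id x)"
      by (rule pdl_symT[OF k pid sabs]) (use xs o in auto)
    also have "prod_list (map (\<lambda>j. s (inv id j)) xs) = (-1) ^ count_list xs i"
      unfolding inv_id s_def by (simp add: prod_list_refl)
    finally show ?thesis using xs by (simp add: inv_id id_def)
  qed
  define F where "F x = mderiv \<alpha> K x * mderiv \<beta> K x" for x
  have meas: "F \<in> borel_measurable borel"
    using mderiv_nice[OF k oa] mderiv_nice[OF k ob] unfolding nice_def F_def
    by (intro borel_measurable_continuous_onI) (auto intro!: continuous_intros)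
  have eqF: "F x = - F (symT s id x)" for x
  proof -
    have "F x = ((-1) ^ \<alpha> i * (-1) ^ \<beta> i) * F (symT s id x)"
      unfolding F_def using rflx[OF oa, of x] rflx[OF ob, of x] by (simp add: algebra_simps)
    also have "(-1::real) ^ \<alpha> i * (-1) ^ \<beta> i = -1"
      using odd by (simp add: power_add[symmetric])
    finally show ?thesis by (simp only: mult_minus1)
  qed
  have "(LINT x|lborel. F x) = (LINT x|lborel. - F (symT s id x))"
    by (rule Bochner_Integration.integral_cong[OF refl eqF])
  also have "\<dots> = - (LINT x|lborel. F (symT s id x))" by simp
  also have "\<dots> = - (LINT x|lborel. F x)" by (simp add: integral_symT[OF pid s1 meas])
  finally show ?thesis unfolding F_def by simp
qed



lemma sum_count_eq:
  fixes \<alpha> \<gamma> :: "'a::finite \<Rightarrow> nat"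
  assumes le: "\<And>i. \<alpha> i \<le> \<gamma> i" and s: "sum \<alpha> UNIV = sum \<gamma> UNIV"
  shows "\<alpha> = \<gamma>"
proof (rule ccontr)
  assume "\<alpha> \<noteq> \<gamma>"
  then obtain a where "\<alpha> a \<noteq> \<gamma> a" by auto
  with le have "\<alpha> a < \<gamma> a" using le_neq_implies_less by blast
  then have "sum \<alpha> UNIV < sum \<gamma> UNIV"
    by (intro sum_strict_mono_ex1) (use le in auto)
  with s show False by simp
qed

lemma even_case:
  assumes k: "K1 K"
  shows "mi_order \<alpha> = 3 \<Longrightarrow> mi_order \<beta> = 3 \<Longrightarrow> (\<And>i. \<alpha> i + \<beta> i = 2 * \<gamma> i) \<Longrightarrow>
    (LINT x|lborel. mderiv \<alpha> K x * mderiv \<beta> K x) = (LINT x|lborel. (mderiv \<gamma> K x)\<^sup>2)"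
proof (induction "\<Sum>i\<in>UNIV. \<alpha> i - \<gamma> i" arbitrary: \<alpha> \<beta> rule: less_induct)
  case less
  have og: "mi_order \<gamma> = 3"
  proof -
    have "2 * mi_order \<gamma> = mi_order \<alpha> + mi_order \<beta>"
      unfolding mi_order_def by (simp add: sum.distrib[symmetric] sum_distrib_left less.prems(3))
    then show ?thesis using less.prems by simp
  qed
  show ?case
  proof (cases "\<forall>i. \<alpha> i \<le> \<gamma> i")
    case True
    have "\<alpha> = \<gamma>" by (rule sum_count_eq) (use True og less.prems in \<open>auto simp: mi_order_def\<close>)
    moreover then have "\<beta> = \<gamma>" using less.prems(3) by (auto simp: fun_eq_iff)
    ultimately show ?thesis by (simp add: power2_eq_square)
  next
    case False
    then obtain i where i: "\<gamma> i < \<alpha> i" by (auto simp: not_le)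
    have "\<exists>j. \<alpha> j < \<gamma> j"
    proof (rule ccontr)
      assume "\<not> (\<exists>j. \<alpha> j < \<gamma> j)"
      then have "\<And>j. \<gamma> j \<le> \<alpha> j" by (auto simp: not_less)
      then have "\<gamma> = \<alpha>" by (rule sum_count_eq) (use og less.prems in \<open>auto simp: mi_order_def\<close>)
      with i show False by simp
    qed
    then obtain j where j: "\<alpha> j < \<gamma> j" by blast
    have ij: "i \<noteq> j" using i j by auto
    define \<alpha>' where "\<alpha>' = \<alpha>(i := \<alpha> i - 1)"
    define \<beta>1 where "\<beta>1 = \<beta>(i := \<beta> i + 1)"
    define \<beta>'' where "\<beta>'' = \<beta>1(j := \<beta>1 j - 1)"
    define \<alpha>2 where "\<alpha>2 = \<alpha>'(j := \<alpha>' j + 1)"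
    have a_eq: "\<alpha> = \<alpha>'(i := \<alpha>' i + 1)" using i by (auto simp: \<alpha>'_def fun_eq_iff)
    have bj: "1 \<le> \<beta> j" using less.prems(3)[of j] j by linarith
    have b1_eq: "\<beta>1 = \<beta>''(j := \<beta>'' j + 1)" using bj ij by (auto simp: \<beta>''_def \<beta>1_def fun_eq_iff)
    have oa': "mi_order \<alpha>' = 2" using less.prems(1) a_eq mi_order_upd[of \<alpha>' i] by simp
    have ob1: "mi_order \<beta>1 = 4" using less.prems(2) mi_order_upd[of \<beta> i] by (simp add: \<beta>1_def)
    have ob'': "mi_order \<beta>'' = 3" using ob1 b1_eq mi_order_upd[of \<beta>'' j] by simp
    have oa2: "mi_order \<alpha>2 = 3" using oa' mi_order_upd[of \<alpha>' j] by (simp add: \<alpha>2_def)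
    have "(LINT x|lborel. mderiv \<alpha> K x * mderiv \<beta> K x)
        = - (LINT x|lborel. mderiv \<alpha>' K x * mderiv \<beta>1 K x)"
      unfolding \<beta>1_def by (subst a_eq, rule ibp_counts[OF k]) (use oa' less.prems in auto)
    also have "(LINT x|lborel. mderiv \<alpha>' K x * mderiv \<beta>1 K x)
        = - (LINT x|lborel. mderiv \<alpha>2 K x * mderiv \<beta>'' K x)"
    proof -
      have e2: "(LINT x|lborel. mderiv \<alpha>2 K x * mderiv \<beta>'' K x) = - (LINT x|lborel. mderiv \<alpha>' K x * mderiv \<beta>1 K x)"
        unfolding \<alpha>2_def b1_eq by (rule ibp_counts[OF k]) (use oa' ob'' in auto)
      then show ?thesis by simp
    qed
    also have "- (- (LINT x|lborel. mderiv \<alpha>2 K x * mderiv \<beta>'' K x)) = (LINT x|lborel. (mderiv \<gamma> K x)\<^sup>2)"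
    proof -
      have sum2: "\<alpha>2 k + \<beta>'' k = 2 * \<gamma> k" for k
        using less.prems(3)[of k] ij i bj
        by (auto simp: \<alpha>2_def \<alpha>'_def \<beta>''_def \<beta>1_def)
      have lt: "(\<Sum>k\<in>UNIV. \<alpha>2 k - \<gamma> k) < (\<Sum>k\<in>UNIV. \<alpha> k - \<gamma> k)"
      proof (rule sum_strict_mono_ex1)
        show "\<forall>k\<in>UNIV. \<alpha>2 k - \<gamma> k \<le> \<alpha> k - \<gamma> k"
          using ij j by (auto simp: \<alpha>2_def \<alpha>'_def)
        show "\<exists>k\<in>UNIV. \<alpha>2 k - \<gamma> k < \<alpha> k - \<gamma> k"
          using ij i by (intro bexI[of _ i]) (auto simp: \<alpha>2_def \<alpha>'_def)
      qed simp
      show ?thesis using less.hyps[OF lt oa2 ob'' sum2] by simp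
    qed
    finally show ?thesis .
  qed
qed



lemma coord_inj:
  assumes "k < CARD('n::{finite,linorder})" "l < CARD('n)" "(coord k :: 'n) = coord l"
  shows "k = l"
proof -
  have d: "distinct (sorted_list_of_set (UNIV :: 'n set))" by simp
  have len: "length (sorted_list_of_set (UNIV :: 'n set)) = CARD('n)" by simp
  show ?thesis using assms nth_eq_iff_index_eq[OF d] len unfolding coord_def by metis
qed

lemma perm_exists:
  fixes xs ys :: "'a::finite list"
  shows "distinct xs \<Longrightarrow> distinct ys \<Longrightarrow> length xs = length ys \<Longrightarrow>
    \<exists>\<sigma>. \<sigma> permutes UNIV \<and> map \<sigma> xs = ys"
proof (induction xs arbitrary: ys)
  case Nil
  then show ?case using permutes_id[of UNIV] by (intro exI[of _ id]) (simp add: id_def)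
next
  case (Cons x xs)
  then obtain y ys' where ys: "ys = y # ys'" by (cases ys) auto
  obtain \<sigma> where \<sigma>: "\<sigma> permutes UNIV" "map \<sigma> xs = ys'"
    using Cons ys by auto
  define \<tau> where "\<tau> = Transposition.transpose (\<sigma> x) y \<circ> \<sigma>"
  have perm: "\<tau> permutes UNIV" unfolding \<tau>_def
    by (rule permutes_compose[OF \<sigma>(1)]) (simp add: permutes_swap_id)
  have "\<sigma> x \<notin> set ys'"
  proof
    assume "\<sigma> x \<in> set ys'"
    then obtain z where "z \<in> set xs" "\<sigma> z = \<sigma> x" using \<sigma>(2) by auto
    then have "z = x" using permutes_inj[OF \<sigma>(1)] by (auto dest: injD)
    with \<open>z \<in> set xs\<close> Cons.prems(1) show False by simp
  qed
  moreover have "y \<notin> set ys'" using Cons.prems(2) ys by simp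
  ultimately have "map (Transposition.transpose (\<sigma> x) y) ys' = ys'"
    by (intro map_idI) (metis transpose_apply_other)
  then have "map \<tau> (x # xs) = ys" unfolding \<tau>_def using \<sigma>(2) ys by (simp flip: map_map)
  with perm show ?case by blast
qed

lemma perms_count:
  fixes xs ys :: "'n::finite list"
  assumes d: "distinct ys" "distinct xs" and l: "length xs = length ys"
    and cnt: "\<And>k. k < length xs \<Longrightarrow> \<gamma> (xs ! k) = \<rho> (ys ! k)"
    and z: "\<And>j. j \<notin> set xs \<Longrightarrow> \<gamma> j = 0" and z2: "\<And>j. j \<notin> set ys \<Longrightarrow> \<rho> j = 0"
  shows "\<gamma> \<in> Perms \<rho>"
proof -
  obtain \<sigma> where \<sigma>: "\<sigma> permutes UNIV" "map \<sigma> xs = ys" using perm_exists[OF d(2) d(1) l] by blast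
  have inj: "inj \<sigma>" using permutes_inj[OF \<sigma>(1)] .
  have "\<gamma> = \<rho> \<circ> \<sigma>"
  proof
    fix j
    show "\<gamma> j = (\<rho> \<circ> \<sigma>) j"
    proof (cases "j \<in> set xs")
      case True
      then obtain k where k: "k < length xs" "xs ! k = j" by (meson in_set_conv_nth)
      have "\<sigma> j = ys ! k" using \<sigma>(2) k by (metis nth_map)
      then show ?thesis using cnt[OF k(1)] k by simp
    next
      case False
      have "\<sigma> j \<notin> set ys"
      proof
        assume "\<sigma> j \<in> set ys"
        then obtain z where "z \<in> set xs" "\<sigma> z = \<sigma> j" using \<sigma>(2) by auto
        then show False using False inj by (auto dest: injD)
      qed
      then show ?thesis using z[OF False] z2 by simp
    qed
  qed
  then show ?thesis unfolding Perms_def using \<sigma>(1) by blast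
qed



lemma mi_order_count: "mi_order (count_list xs) = length (xs :: 'n::finite list)"
  unfolding mi_order_def by (simp add: length_counts)

lemma rho_counts:
  assumes "CARD('n::{finite,linorder}) \<ge> 2"
  shows "(rho 1 :: 'n \<Rightarrow> nat) = count_list [coord 0, coord 0, coord 0]"
    "(rho 2 :: 'n \<Rightarrow> nat) = count_list [coord 0, coord 0, coord 1]"
    "CARD('n) \<ge> 3 \<Longrightarrow> (rho 3 :: 'n \<Rightarrow> nat) = count_list [coord 0, coord 1, coord 2]"
proof -
  have 01: "(coord 0 :: 'n) \<noteq> coord 1" using coord_inj[of 0 1] assms by force
  show "(rho 1 :: 'n \<Rightarrow> nat) = count_list [coord 0, coord 0, coord 0]"
    by (auto simp: rho_def fun_eq_iff)
  show "(rho 2 :: 'n \<Rightarrow> nat) = count_list [coord 0, coord 0, coord 1]"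
    using 01 by (auto simp: rho_def fun_eq_iff)
  assume "CARD('n) \<ge> 3"
  then have "(coord 0 :: 'n) \<noteq> coord 2" "(coord 1 :: 'n) \<noteq> coord 2"
    using coord_inj[of 0 2] coord_inj[of 1 2] by force+
  then show "(rho 3 :: 'n \<Rightarrow> nat) = count_list [coord 0, coord 1, coord 2]"
    using 01 by (auto simp: rho_def fun_eq_iff)
qed

lemma ex_list3: "length (xs::'a list) = 3 \<Longrightarrow> \<exists>a b c. xs = [a, b, c]"
  by (auto simp: numeral_3_eq_3 length_Suc_conv)

lemma perm_two: fixes c0 c1 u v :: "'n::finite" assumes "c0 \<noteq> c1" "u \<noteq> v"
  shows "count_list [u, u, v] \<in> Perms (count_list [c0, c0, c1])"
  by (rule perms_count[of "[c0, c1]" "[u, v]"]) (use assms in \<open>auto simp: less_Suc_eq\<close>)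

lemma perm_one: fixes c0 a :: "'n::finite"
  shows "count_list [a, a, a] \<in> Perms (count_list [c0, c0, c0])"
  by (rule perms_count[of "[c0]" "[a]"]) auto

lemma perm_three: fixes c0 c1 c2 a b c :: "'n::finite" assumes "distinct [c0,c1,c2]" "distinct [a,b,c]"
  shows "count_list [a, b, c] \<in> Perms (count_list [c0, c1, c2])"
  by (rule perms_count[of "[c0, c1, c2]" "[a, b, c]"]) (use assms in \<open>auto simp: less_Suc_eq\<close>)

lemma classify:
  fixes \<gamma> :: "'n::{finite,linorder} \<Rightarrow> nat"
  assumes d2: "CARD('n) \<ge> 2" and o: "mi_order \<gamma> = 3"
  shows "\<exists>q\<in>{1,2} \<union> (if CARD('n) \<ge> 3 then {3} else {}). \<gamma> \<in> Perms (rho q)"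
proof -
  define c0 c1 c2 where "c0 = (coord 0 :: 'n)" "c1 = (coord 1 :: 'n)" "c2 = (coord 2 :: 'n)"
  have 01: "c0 \<noteq> c1" using coord_inj[of 0 1] d2 unfolding c0_c1_c2_def by force
  obtain xs where xs: "\<forall>i. count_list xs i = \<gamma> i" using exists_list_counts by blast
  have "length xs = 3" using o xs by (simp add: length_counts mi_order_def)
  then obtain a b c where abc: "xs = [a, b, c]" using ex_list3 by blast
  have g: "\<gamma> = count_list [a, b, c]" using xs abc by auto
  have r1: "rho 1 = count_list [c0, c0, c0]" and r2: "rho 2 = count_list [c0, c0, c1]"
    using rho_counts[OF d2] unfolding c0_c1_c2_def by auto
  have two: "count_list [u, u, v] \<in> Perms (rho 2)" if "u \<noteq> v" for u v :: 'n
    unfolding r2 using perm_two[OF 01 that] .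
  show ?thesis
  proof (cases "a = b \<and> b = c")
    case True
    have "\<gamma> \<in> Perms (rho 1)" unfolding r1 g using True perm_one[of a c0] by simp
    then show ?thesis by auto
  next
    case F1: False
    show ?thesis
    proof (cases "a = b \<or> b = c \<or> a = c")
      case True
      have "\<gamma> \<in> Perms (rho 2)"
      proof -
        { assume "a = b" then have "b \<noteq> c" using F1 by auto
          then have "\<gamma> = count_list [b, b, c]" using \<open>a = b\<close> g by simp
          then have ?thesis using two[OF \<open>b \<noteq> c\<close>] by simp }
        moreover
        { assume "b = c" then have "a \<noteq> b" using F1 by auto
          have "\<gamma> = count_list [b, b, a]" using \<open>b = c\<close> g by (simp add: fun_eq_iff)
          then have ?thesis using two[of b a] \<open>a \<noteq> b\<close> by simp }
        moreover
        { assume "a = c" then have "a \<noteq> b" using F1 by auto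
          have "\<gamma> = count_list [a, a, b]" using \<open>a = c\<close> g by (simp add: fun_eq_iff)
          then have ?thesis using two[of a b] \<open>a \<noteq> b\<close> by simp }
        ultimately show ?thesis using True by blast
      qed
      then show ?thesis by auto
    next
      case False
      then have dabc: "distinct [a, b, c]" by simp
      have "card (set [a, b, c]) = 3" using distinct_card[OF dabc] by simp
      moreover have "card (set [a, b, c]) \<le> CARD('n)" by (rule card_mono) auto
      ultimately have d3: "CARD('n) \<ge> 3" by simp
      then have 02: "c0 \<noteq> c2" "c1 \<noteq> c2" using coord_inj[of 0 2] coord_inj[of 1 2] unfolding c0_c1_c2_def by force+
      have r3: "rho 3 = count_list [c0, c1, c2]"
        using rho_counts(3)[OF d2 d3] unfolding c0_c1_c2_def by auto
      have "\<gamma> \<in> Perms (rho 3)"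
        unfolding r3 g by (rule perm_three) (use 01 02 dabc in simp_all)
      then show ?thesis using d3 by auto
    qed
  qed
qed

lemma sq_int_Perms:
  assumes k: "K1 K" and o: "mi_order \<rho> \<le> 4" and g: "\<gamma> \<in> Perms \<rho>"
  shows "sq_int \<gamma> K = sq_int \<rho> K"
proof -
  obtain \<sigma> where \<sigma>: "\<sigma> permutes UNIV" "\<gamma> = \<rho> \<circ> \<sigma>" using g unfolding Perms_def by blast
  show ?thesis using sq_int_perm[OF k o \<sigma>(1)] \<sigma>(2) by simp
qed

lemma zero_line:
  fixes h :: "'a::real_normed_vector \<Rightarrow> real"
  assumes d: "\<And>x. ((\<lambda>t. h (x + t *\<^sub>R e)) has_real_derivative 0) (at 0)"
    and e: "norm e = 1" and s: "\<And>x. 1 < norm x \<Longrightarrow> h x = 0"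
  shows "h x = 0"
proof -
  have "\<And>t. ((\<lambda>t. h (x + t *\<^sub>R e)) has_real_derivative 0) (at t)"
    using line_deriv[of h e "\<lambda>_. 0", OF d] by simp
  then have "h (x + 0 *\<^sub>R e) = h (x + (norm x + 2) *\<^sub>R e)"
    using DERIV_isconst_all[of "\<lambda>t. h (x + t *\<^sub>R e)" 0 "norm x + 2"] by blast
  also have "\<dots> = 0"
  proof (rule s)
    have "norm ((norm x + 2) *\<^sub>R e) = norm x + 2" using e by simp
    moreover have "norm ((norm x + 2) *\<^sub>R e) \<le> norm (x + (norm x + 2) *\<^sub>R e) + norm x"
      using norm_triangle_ineq4[of "x + (norm x + 2) *\<^sub>R e" x] by simp
    ultimately show "1 < norm (x + (norm x + 2) *\<^sub>R e)" by linarith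
  qed
  finally show ?thesis by simp
qed

lemma cont_sq_zero:
  fixes g :: "'a::euclidean_space \<Rightarrow> real"
  assumes c: "continuous_on UNIV g" and i: "integrable lborel (\<lambda>x. (g x)\<^sup>2)"
    and z: "(LINT x|lborel. (g x)\<^sup>2) = 0"
  shows "g x = 0"
proof -
  have "AE x in lborel. (g x)\<^sup>2 = 0"
    using integral_nonneg_eq_0_iff_AE[OF i] z by simp
  then have "AE x in lebesgue. x \<in> {x. g x = 0}" by (intro AE_completion) simp
  moreover have "closed {x. g x = 0}"
    using continuous_closed_preimage_constant[OF c closed_UNIV, of 0] by simp
  ultimately show ?thesis using mem_closed_if_AE_lebesgue by blast
qed

lemma B_pos:
  fixes K :: "real^'n::{finite,linorder} \<Rightarrow> real"
  assumes d2: "CARD('n) \<ge> 2" and k: "K1 K"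
  shows "sq_int (rho 2) K > 0"
proof -
  define c0 c1 where "c0 = (coord 0 :: 'n)" "c1 = (coord 1 :: 'n)"
  have 01: "c0 \<noteq> c1" using coord_inj[of 0 1] d2 unfolding c0_c1_def by force
  have cpu: "cont_partials_upto 4 K" by (rule K1_cpu[OF k])
  have supp: "\<And>x. 1 < norm x \<Longrightarrow> K x = 0" using k unfolding K1_def by blast
  have r2: "rho 2 = count_list [c1, c0, c0]"
    using rho_counts(2)[OF d2] 01 unfolding c0_c1_def by (auto simp: fun_eq_iff)
  have M: "mderiv (rho 2) K = pdl [c1, c0, c0] K"
    by (rule mderiv_eq[OF cpu]) (simp_all add: r2 mi_order_count)
  have nice: "nice (pdl [c1, c0, c0] K)" by (rule pdl_nice[OF k]) simp
  have "sq_int (rho 2) K \<ge> 0" unfolding sq_int_def by simp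
  moreover have "sq_int (rho 2) K \<noteq> 0"
  proof
    assume z: "sq_int (rho 2) K = 0"
    have g0: "pdl [c1, c0, c0] K x = 0" for x
    proof (rule cont_sq_zero[of "pdl [c1, c0, c0] K"])
      show "continuous_on UNIV (pdl [c1, c0, c0] K)" using nice by (simp add: nice_def)
      show "integrable lborel (\<lambda>x. (pdl [c1, c0, c0] K x)\<^sup>2)"
        using nice_integrable[OF nice_mult[OF nice, of "pdl [c1, c0, c0] K"]] nice
        by (simp add: nice_def power2_eq_square)
      show "(LINT x|lborel. (pdl [c1, c0, c0] K x)\<^sup>2) = 0" using z M by (simp add: sq_int_def)
    qed
    have h1: "pdl [c0, c0] K x = 0" for x
    proof (rule zero_line[where e = "axis c1 1"])
      show "((\<lambda>t. pdl [c0, c0] K (y + t *\<^sub>R axis c1 1)) has_real_derivative 0) (at 0)" for y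
        using cpu_deriv[OF cpu, of "[c0, c0]" y c1] g0[of y] by simp
      show "1 < norm y \<Longrightarrow> pdl [c0, c0] K y = 0" for y by (rule pdl_supp[OF cpu supp]) simp_all
    qed simp
    have h2: "pdl [c0] K x = 0" for x
    proof (rule zero_line[where e = "axis c0 1"])
      show "((\<lambda>t. pdl [c0] K (y + t *\<^sub>R axis c0 1)) has_real_derivative 0) (at 0)" for y
        using cpu_deriv[OF cpu, of "[c0]" y c0] h1[of y] by simp
      show "1 < norm y \<Longrightarrow> pdl [c0] K y = 0" for y by (rule pdl_supp[OF cpu supp]) simp_all
    qed simp
    have h3: "K x = 0" for x
    proof (rule zero_line[where e = "axis c0 1"])
      show "((\<lambda>t. K (y + t *\<^sub>R axis c0 1)) has_real_derivative 0) (at 0)" for y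
        using cpu_deriv[OF cpu, of "[]" y c0] h2[of y] by simp
    qed (use supp in simp_all)
    have "(LINT u|lborel. K u) = 1" using k unfolding K1_def by blast
    then show False using h3 by simp
  qed
  ultimately show ?thesis by simp
qed



lemma prod_le_avg:
  assumes k: "K1 K" and oa: "mi_order \<alpha> \<le> 4" and ob: "mi_order \<beta> \<le> 4"
  shows "(LINT x|lborel. mderiv \<alpha> K x * mderiv \<beta> K x) \<le> (sq_int \<alpha> K + sq_int \<beta> K) / 2"
proof -
  have na: "nice (mderiv \<alpha> K)" and nb: "nice (mderiv \<beta> K)"
    using mderiv_nice[OF k oa] mderiv_nice[OF k ob] .
  have i1: "integrable lborel (\<lambda>x. mderiv \<alpha> K x * mderiv \<beta> K x)"
    using nice_integrable[OF nice_mult[OF na]] nb by (simp add: nice_def)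
  have ia: "integrable lborel (\<lambda>x. (mderiv \<alpha> K x)\<^sup>2)"
    using nice_integrable[OF nice_mult[OF na]] na by (simp add: nice_def power2_eq_square)
  have ib: "integrable lborel (\<lambda>x. (mderiv \<beta> K x)\<^sup>2)"
    using nice_integrable[OF nice_mult[OF nb]] nb by (simp add: nice_def power2_eq_square)
  have "(LINT x|lborel. mderiv \<alpha> K x * mderiv \<beta> K x)
      \<le> (LINT x|lborel. ((mderiv \<alpha> K x)\<^sup>2 + (mderiv \<beta> K x)\<^sup>2) / 2)"
  proof (rule integral_mono[OF i1])
    show "integrable lborel (\<lambda>x. ((mderiv \<alpha> K x)\<^sup>2 + (mderiv \<beta> K x)\<^sup>2) / 2)"
      using ia ib by simp
    fix x
    have "0 \<le> (mderiv \<alpha> K x - mderiv \<beta> K x)\<^sup>2" by simp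
    then show "mderiv \<alpha> K x * mderiv \<beta> K x \<le> ((mderiv \<alpha> K x)\<^sup>2 + (mderiv \<beta> K x)\<^sup>2) / 2"
      by (simp add: power2_eq_square algebra_simps)
  qed
  also have "\<dots> = (sq_int \<alpha> K + sq_int \<beta> K) / 2"
    unfolding sq_int_def using ia ib by simp
  finally show ?thesis .
qed

theorem lemma5:
  fixes K :: "real^'n::{finite,linorder} \<Rightarrow> real"
  assumes d2: "CARD('n) \<ge> 2"
    and k1: "K1 K"
  shows "(\<forall>\<alpha> \<beta> :: 'n \<Rightarrow> nat. mi_order \<alpha> = 3 \<longrightarrow> mi_order \<beta> = 3 \<longrightarrow>
            (\<forall>q\<in>{1,2} \<union> (if CARD('n) \<ge> 3 then {3} else {}).
                (\<lambda>i. \<alpha> i + \<beta> i) \<in> {(\<lambda>i. 2 * \<gamma> i) | \<gamma>. \<gamma> \<in> Perms (rho q)} \<longrightarrow>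
                (LINT u|lborel. mderiv \<alpha> K u * mderiv \<beta> K u) = sq_int (rho q) K) \<and>
            ((\<forall>q\<in>{1,2} \<union> (if CARD('n) \<ge> 3 then {3} else {}).
                (\<lambda>i. \<alpha> i + \<beta> i) \<notin> {(\<lambda>i. 2 * \<gamma> i) | \<gamma>. \<gamma> \<in> Perms (rho q)}) \<longrightarrow>
                (LINT u|lborel. mderiv \<alpha> K u * mderiv \<beta> K u) = 0))
         \<and> a_K K \<ge> 1 \<and> (CARD('n) \<ge> 3 \<longrightarrow> b_K K \<le> 1)"
proof -
  define Q where "Q = {1::nat,2} \<union> (if CARD('n) \<ge> 3 then {3} else {})"
  define c0 c1 c2 where "c0 = (coord 0 :: 'n)" "c1 = (coord 1 :: 'n)" "c2 = (coord 2 :: 'n)"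
  have 01: "c0 \<noteq> c1" using coord_inj[of 0 1] d2 unfolding c0_c1_c2_def by force
  have r1: "rho 1 = count_list [c0, c0, c0]" and r2: "rho 2 = count_list [c0, c0, c1]"
    using rho_counts[OF d2] unfolding c0_c1_c2_def by auto
  have oQ: "mi_order (rho q :: 'n \<Rightarrow> nat) = 3" if "q \<in> Q" for q
  proof -
    { assume "q = 3" then have d3: "CARD('n) \<ge> 3" using that by (auto simp: Q_def split: if_splits)
      have ?thesis using rho_counts(3)[OF d2 d3] \<open>q = 3\<close> by (simp add: mi_order_count) }
    then show ?thesis using that r1 r2 by (auto simp: Q_def mi_order_count split: if_splits)
  qed
  have part1: "(\<forall>q\<in>Q. (\<lambda>i. \<alpha> i + \<beta> i) \<in> {(\<lambda>i. 2 * \<gamma> i) | \<gamma>. \<gamma> \<in> Perms (rho q)} \<longrightarrow>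
                (LINT u|lborel. mderiv \<alpha> K u * mderiv \<beta> K u) = sq_int (rho q) K) \<and>
            ((\<forall>q\<in>Q. (\<lambda>i. \<alpha> i + \<beta> i) \<notin> {(\<lambda>i. 2 * \<gamma> i) | \<gamma>. \<gamma> \<in> Perms (rho q)}) \<longrightarrow>
                (LINT u|lborel. mderiv \<alpha> K u * mderiv \<beta> K u) = 0)"
    if oa: "mi_order \<alpha> = 3" and ob: "mi_order \<beta> = 3" for \<alpha> \<beta> :: "'n \<Rightarrow> nat"
  proof (intro conjI ballI impI)
    fix q assume q: "q \<in> Q" and mem: "(\<lambda>i. \<alpha> i + \<beta> i) \<in> {(\<lambda>i. 2 * \<gamma> i) | \<gamma>. \<gamma> \<in> Perms (rho q)}"
    then obtain \<gamma> where \<gamma>: "(\<lambda>i. \<alpha> i + \<beta> i) = (\<lambda>i. 2 * \<gamma> i)" "\<gamma> \<in> Perms (rho q)" by blast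
    have s: "\<alpha> i + \<beta> i = 2 * \<gamma> i" for i using \<gamma>(1) by (metis)
    have "(LINT u|lborel. mderiv \<alpha> K u * mderiv \<beta> K u) = sq_int \<gamma> K"
      unfolding sq_int_def by (rule even_case[OF k1 oa ob s])
    also have "\<dots> = sq_int (rho q) K"
      by (rule sq_int_Perms[OF k1 _ \<gamma>(2)]) (use oQ[OF q] in simp)
    finally show "(LINT u|lborel. mderiv \<alpha> K u * mderiv \<beta> K u) = sq_int (rho q) K" .
  next
    assume nm: "\<forall>q\<in>Q. (\<lambda>i. \<alpha> i + \<beta> i) \<notin> {(\<lambda>i. 2 * \<gamma> i) | \<gamma>. \<gamma> \<in> Perms (rho q)}"
    show "(LINT u|lborel. mderiv \<alpha> K u * mderiv \<beta> K u) = 0"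
    proof (cases "\<exists>i. odd (\<alpha> i + \<beta> i)")
      case True
      then obtain i where "odd (\<alpha> i + \<beta> i)" by blast
      then show ?thesis using odd_case[OF k1, of \<alpha> \<beta> i] oa ob by simp
    next
      case False
      define \<gamma> where "\<gamma> i = (\<alpha> i + \<beta> i) div 2" for i
      have s: "\<alpha> i + \<beta> i = 2 * \<gamma> i" for i using False unfolding \<gamma>_def by auto
      have "2 * mi_order \<gamma> = mi_order \<alpha> + mi_order \<beta>"
        unfolding mi_order_def by (simp add: sum.distrib[symmetric] sum_distrib_left s)
      then have og: "mi_order \<gamma> = 3" using oa ob by simp
      obtain q where q: "q \<in> Q" "\<gamma> \<in> Perms (rho q)" using classify[OF d2 og] unfolding Q_def by blast
      have "(\<lambda>i. \<alpha> i + \<beta> i) \<in> {(\<lambda>i. 2 * \<gamma> i) | \<gamma>. \<gamma> \<in> Perms (rho q)}"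
        using q(2) s by auto
      with nm q(1) show ?thesis by blast
    qed
  qed
  have Bpos: "sq_int (rho 2) K > 0" by (rule B_pos[OF d2 k1])
  have o2: "mi_order (rho 2 :: 'n \<Rightarrow> nat) \<le> 4" using r2 by (simp add: mi_order_count)
  have aK: "a_K K \<ge> 1"
  proof -
    define \<beta> where "\<beta> = count_list [c0, c1, c1]"
    have ob: "mi_order \<beta> = 3" by (simp add: \<beta>_def mi_order_count)
    have o1: "mi_order (rho 1 :: 'n \<Rightarrow> nat) = 3" using r1 by (simp add: mi_order_count)
    have s: "rho 1 i + \<beta> i = 2 * rho 2 i" for i unfolding r1 r2 \<beta>_def using 01 by auto
    have e: "(LINT x|lborel. mderiv (rho 1) K x * mderiv \<beta> K x) = sq_int (rho 2) K"
      unfolding sq_int_def by (rule even_case[OF k1 o1 ob s])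
    have "\<beta> = count_list [c1, c1, c0]" by (simp add: \<beta>_def fun_eq_iff)
    then have "\<beta> \<in> Perms (rho 2)" unfolding r2 using perm_two[OF 01, of c1 c0] 01 by simp
    then have sb: "sq_int \<beta> K = sq_int (rho 2) K" by (rule sq_int_Perms[OF k1 o2])
    have "sq_int (rho 2) K \<le> (sq_int (rho 1) K + sq_int \<beta> K) / 2"
      using prod_le_avg[OF k1, of "rho 1" \<beta>] o1 ob e by simp
    then have "sq_int (rho 2) K \<le> sq_int (rho 1) K" using sb by simp
    then show ?thesis unfolding a_K_def using Bpos by simp
  qed
  have bK: "b_K K \<le> 1" if d3: "CARD('n) \<ge> 3"
  proof -
    have 02: "c0 \<noteq> c2" "c1 \<noteq> c2" using coord_inj[of 0 2] coord_inj[of 1 2] d3 unfolding c0_c1_c2_def by force+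
    have r3: "rho 3 = count_list [c0, c1, c2]"
      using rho_counts(3)[OF d2 d3] unfolding c0_c1_c2_def by auto
    define \<alpha> where "\<alpha> = count_list [c0, c0, c2]"
    define \<beta> where "\<beta> = count_list [c1, c1, c2]"
    have oa: "mi_order \<alpha> = 3" by (simp add: \<alpha>_def mi_order_count)
    have ob: "mi_order \<beta> = 3" by (simp add: \<beta>_def mi_order_count)
    have s: "\<alpha> i + \<beta> i = 2 * rho 3 i" for i unfolding r3 \<alpha>_def \<beta>_def using 01 02 by auto
    have e: "(LINT x|lborel. mderiv \<alpha> K x * mderiv \<beta> K x) = sq_int (rho 3) K"
      unfolding sq_int_def by (rule even_case[OF k1 oa ob s])
    have "\<alpha> \<in> Perms (rho 2)" unfolding r2 \<alpha>_def using perm_two[OF 01, of c0 c2] 02 by simp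
    then have sa: "sq_int \<alpha> K = sq_int (rho 2) K" by (rule sq_int_Perms[OF k1 o2])
    have "\<beta> \<in> Perms (rho 2)" unfolding r2 \<beta>_def using perm_two[OF 01, of c1 c2] 02 by simp
    then have sb: "sq_int \<beta> K = sq_int (rho 2) K" by (rule sq_int_Perms[OF k1 o2])
    have "sq_int (rho 3) K \<le> (sq_int \<alpha> K + sq_int \<beta> K) / 2"
      using prod_le_avg[OF k1, of \<alpha> \<beta>] oa ob e by simp
    then have "sq_int (rho 3) K \<le> sq_int (rho 2) K" using sa sb by simp
    then show ?thesis unfolding b_K_def using Bpos by simp
  qed
  show ?thesis using part1 aK bK unfolding Q_def by blast
qed

end
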